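(* Let $\mu$ be a $C_0$-nice measure on $\mathbb{C}$ and $A>1$. Then $\{\Psi^\mu_{Q,A}\}_{Q}$ (indexed by dyadic squares $Q$) is a $C$-Riesz family with $C=C(C_0,A)$ depending only on $C_0$ and $A$: for any choice $\psi_Q\in\Psi^\mu_{Q,A}$ and any sequence $\{a_Q\}$ of complex numbers, $$\Big\|\sum_Q a_Q\psi_Q\Big\|_{L^2(\mu)}^2\le C\sum_Q|a_Q|^2.$$
   Context: Measures are positive locally finite Borel measures on $\mathbb{C}$; $B(z,r)$ is the open disc. $\mu$ is $C_0$-nice if $\mu(B(z,r))\le C_0r$ for all discs. Dyadic squares are $[k2^j,(k+1)2^j)\times[l2^j,(l+1)2^j)$, $j,k,l\in\mathbb{Z}$, with centre $z_Q$ and side length $\ell(Q)$. $\Psi^\mu_{Q,A}$ is the set of functions $\psi$ with $\operatorname{supp}(\psi)\subset B(z_Q,A\ell(Q))$, $\|\psi\|_{\operatorname{Lip}}\le\ell(Q)^{-3/2}$ and $\int\psi\,d\mu=0$. *)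

theory Defs
  imports "HOL-Analysis.Analysis"
begin

text \<open>A measure on the complex plane: positive Borel measure, C0-nice.
  (Local finiteness follows from niceness.)\<close>
definition nice_measure :: "real \<Rightarrow> complex measure \<Rightarrow> bool" where
  "nice_measure C0 M \<longleftrightarrow> sets M = sets borel \<and>
     (\<forall>z r. r > 0 \<longrightarrow> emeasure M (ball z r) \<le> ennreal (C0 * r))"

text \<open>Dyadic squares [k 2^j,(k+1)2^j) x [l 2^j,(l+1)2^j) indexed by (j,k,l).\<close>
type_synonym dyadic = "int \<times> int \<times> int"

definition dyadic_side :: "dyadic \<Rightarrow> real" where
  "dyadic_side Q = (case Q of (j, k, l) \<Rightarrow> 2 powr (real_of_int j))"

definition dyadic_square :: "dyadic \<Rightarrow> complex set" where
  "dyadic_square Q = (case Q of (j, k, l) \<Rightarrow>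
     {z. real_of_int k * 2 powr j \<le> Re z \<and> Re z < (real_of_int k + 1) * 2 powr j \<and>
         real_of_int l * 2 powr j \<le> Im z \<and> Im z < (real_of_int l + 1) * 2 powr j})"

definition dyadic_center :: "dyadic \<Rightarrow> complex" where
  "dyadic_center Q = (case Q of (j, k, l) \<Rightarrow>
     Complex ((real_of_int k + 1/2) * 2 powr j) ((real_of_int l + 1/2) * 2 powr j))"

definition Psi :: "complex measure \<Rightarrow> dyadic \<Rightarrow> real \<Rightarrow> (complex \<Rightarrow> complex) set" where
  "Psi M Q A = {\<psi>.
     closure {x. \<psi> x \<noteq> 0} \<subseteq> ball (dyadic_center Q) (A * dyadic_side Q) \<and>
     (dyadic_side Q powr (-3/2))-lipschitz_on UNIV \<psi> \<and>
     integrable M \<psi> \<and> (\<integral>x. \<psi> x \<partial>M) = 0}"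

end

theory Submission
  imports Defs
begin


lemma side_pos[simp]: "dyadic_side Q > 0"
  by (auto simp: dyadic_side_def split: prod.splits)

lemma side_eq: "dyadic_side Q = 2 powr (real_of_int (fst Q))"
  by (auto simp: dyadic_side_def split: prod.splits)

locale rs =
  fixes M :: "complex measure" and C0 A :: real and \<psi> :: "dyadic \<Rightarrow> complex \<Rightarrow> complex"
  assumes nice: "nice_measure C0 M" and A1: "A > 1" and psi: "\<And>Q. \<psi> Q \<in> Psi M Q A"
begin

definition "D = max C0 0"

lemma sets_M: "sets M = sets borel"
  using nice by (simp add: nice_measure_def)

lemma space_M[simp]: "space M = UNIV"
  using sets_eq_imp_space_eq[OF sets_M] by simp

lemma D_nonneg: "D \<ge> 0" by (simp add: D_def)

lemma emeas_ball: "r > 0 \<Longrightarrow> emeasure M (ball z r) \<le> ennreal (D * r)"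
proof -
  assume r: "r > 0"
  have "emeasure M (ball z r) \<le> ennreal (C0 * r)" using nice r by (simp add: nice_measure_def)
  also have "\<dots> \<le> ennreal (D * r)" using r by (intro ennreal_leI) (auto simp: D_def intro: mult_right_mono)
  finally show ?thesis .
qed

lemma ball_sets[simp]: "ball z r \<in> sets M"
  using sets_M by simp

lemma emeas_ball_fin: "emeasure M (ball z r) < \<infinity>"
proof (cases "r > 0")
  case True
  have "emeasure M (ball z r) \<le> ennreal (D*r)" by (rule emeas_ball[OF True])
  moreover have "ennreal (D*r) < \<infinity>" by simp
  ultimately show ?thesis by (rule order_le_less_trans)
next
  case False
  hence "ball z r = {}" by simp
  hence "emeasure M (ball z r) = 0" by (simp del: ball_eq_empty)
  thus ?thesis by simp
qed

lemma meas_ball: "r > 0 \<Longrightarrow> measure M (ball z r) \<le> D * r"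
proof -
  assume r: "r > 0"
  have "measure M (ball z r) = enn2real (emeasure M (ball z r))" by (simp add: measure_def)
  also have "\<dots> \<le> enn2real (ennreal (D*r))"
    by (rule enn2real_mono[OF emeas_ball[OF r]]) simp
  also have "\<dots> = D * r" using r D_nonneg by simp
  finally show ?thesis .
qed

lemma psi_props: "closure {x. \<psi> Q x \<noteq> 0} \<subseteq> ball (dyadic_center Q) (A * dyadic_side Q) \<and>
     (dyadic_side Q powr (-3/2))-lipschitz_on UNIV (\<psi> Q) \<and>
     integrable M (\<psi> Q) \<and> (\<integral>x. \<psi> Q x \<partial>M) = 0"
  using psi[of Q] unfolding Psi_def mem_Collect_eq .

lemma lip: "dist (\<psi> Q x) (\<psi> Q y) \<le> dyadic_side Q powr (-3/2) * dist x y"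
proof -
  have "(dyadic_side Q powr (-3/2))-lipschitz_on UNIV (\<psi> Q)" using psi_props[of Q] by (elim conjE)
  thus ?thesis by (rule lipschitz_onD) simp_all
qed

lemma supp: "\<psi> Q x \<noteq> 0 \<Longrightarrow> dist (dyadic_center Q) x < A * dyadic_side Q"
proof -
  assume "\<psi> Q x \<noteq> 0"
  hence "x \<in> {x. \<psi> Q x \<noteq> 0}" by simp
  hence "x \<in> closure {x. \<psi> Q x \<noteq> 0}" by (rule subsetD[OF closure_subset])
  moreover have "closure {x. \<psi> Q x \<noteq> 0} \<subseteq> ball (dyadic_center Q) (A * dyadic_side Q)"
    using psi_props[of Q] by (elim conjE)
  ultimately have "x \<in> ball (dyadic_center Q) (A * dyadic_side Q)" by (rule rev_subsetD)
  thus ?thesis by simp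
qed

lemma supp0: "dist (dyadic_center Q) x \<ge> A * dyadic_side Q \<Longrightarrow> \<psi> Q x = 0"
proof (rule ccontr)
  assume a: "dist (dyadic_center Q) x \<ge> A * dyadic_side Q" and "\<psi> Q x \<noteq> 0"
  hence "dist (dyadic_center Q) x < A * dyadic_side Q" by (intro supp)
  with a show False by linarith
qed

lemma integrable_psi: "integrable M (\<psi> Q)"
  using psi_props[of Q] by (elim conjE)

lemma int_psi0: "(\<integral>x. \<psi> Q x \<partial>M) = 0"
  using psi_props[of Q] by (elim conjE)

lemma meas_psi[measurable]: "\<psi> Q \<in> borel_measurable M"
proof -
  have "continuous_on UNIV (\<psi> Q)"
    using psi_props[of Q] by (elim conjE) (rule lipschitz_on_continuous_on)
  hence "\<psi> Q \<in> borel_measurable borel" by (rule borel_measurable_continuous_onI)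
  thus ?thesis by (subst measurable_cong_sets[OF sets_M refl]) 
qed

lemma bound: "cmod (\<psi> Q x) \<le> 2 * A * dyadic_side Q powr (-1/2)"
proof (cases "\<psi> Q x = 0")
  case True thus ?thesis using A1 by simp
next
  case False
  let ?s = "dyadic_side Q"
  define r where "r = 2 * A * ?s"
  have r0: "r > 0" using A1 by (simp add: r_def)
  define y where "y = x + complex_of_real r"
  have "dist x y = \<bar>r\<bar>" by (simp add: y_def dist_norm)
  hence dxy: "dist x y = 2 * A * ?s" using r0 by (simp add: r_def)
  have "dist (dyadic_center Q) x < A * ?s" using supp[OF False] .
  hence "dist (dyadic_center Q) y \<ge> A * ?s" using dxy dist_triangle[of x y "dyadic_center Q"]
    by (simp add: dist_commute)
  hence y0: "\<psi> Q y = 0" by (rule supp0)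
  have "cmod (\<psi> Q x) = dist (\<psi> Q x) (\<psi> Q y)" by (simp add: y0 dist_norm)
  also have "\<dots> \<le> ?s powr (-3/2) * (2 * A * ?s)" using lip[of Q x y] dxy by simp
  also have "\<dots> = 2 * A * (?s powr (-3/2) * ?s powr 1)" using side_pos[of Q] by (simp add: less_imp_le)
  also have "?s powr (-3/2) * ?s powr 1 = ?s powr (-1/2)" by (subst powr_add[symmetric]) simp
  finally show ?thesis using side_pos[of Q] by (simp add: abs_of_pos)
qed

end


context rs begin

definition G where "G Q R = (\<integral>x. \<psi> Q x * cnj (\<psi> R x) \<partial>M)"

lemma cnj_borel: "cnj \<in> borel_measurable borel"
  by (rule borel_measurable_continuous_onI) (intro continuous_intros)

lemma meas_cnj[measurable]: "(\<lambda>x. cnj (\<psi> R x)) \<in> borel_measurable M"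
  using measurable_compose[OF meas_psi cnj_borel] by (simp add: o_def)

lemma integrable_prod: "integrable M (\<lambda>x. \<psi> Q x * cnj (\<psi> R x))"
proof (rule Bochner_Integration.integrable_bound)
  let ?B = "2 * A * dyadic_side R powr (-1/2)"
  show "integrable M (\<lambda>x. complex_of_real ?B * \<psi> Q x)"
    using integrable_psi by simp
  show "(\<lambda>x. \<psi> Q x * cnj (\<psi> R x)) \<in> borel_measurable M" by measurable
  show "AE x in M. norm (\<psi> Q x * cnj (\<psi> R x)) \<le> norm (complex_of_real ?B * \<psi> Q x)"
  proof (rule AE_I2)
    fix x
    have "norm (\<psi> Q x * cnj (\<psi> R x)) = cmod (\<psi> Q x) * cmod (\<psi> R x)" by (simp add: norm_mult)
    also have "\<dots> \<le> cmod (\<psi> Q x) * ?B" by (rule mult_left_mono[OF bound]) simp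
    also have "\<dots> = norm (complex_of_real ?B * \<psi> Q x)" using A1 by (simp add: norm_mult)
    finally show "norm (\<psi> Q x * cnj (\<psi> R x)) \<le> norm (complex_of_real ?B * \<psi> Q x)" .
  qed
qed

lemma L1: "(\<integral>x. cmod (\<psi> Q x) \<partial>M) \<le> 2 * A^2 * D * dyadic_side Q powr (1/2)"
proof -
  let ?s = "dyadic_side Q"
  let ?B = "2 * A * ?s powr (-1/2)"
  let ?b = "ball (dyadic_center Q) (A * ?s)"
  have ib: "integrable M (indicat_real ?b)"
    by (rule integrable_real_indicator[OF ball_sets emeas_ball_fin])
  have "(\<integral>x. cmod (\<psi> Q x) \<partial>M) \<le> (\<integral>x. ?B * indicat_real ?b x \<partial>M)"
  proof (rule integral_mono)
    show "integrable M (\<lambda>x. cmod (\<psi> Q x))" using integrable_psi by (rule integrable_norm)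
    show "integrable M (\<lambda>x. ?B * indicat_real ?b x)" using ib by simp
    fix x
    show "cmod (\<psi> Q x) \<le> ?B * indicat_real ?b x"
    proof (cases "\<psi> Q x = 0")
      case True thus ?thesis using A1 by simp
    next
      case False
      hence "x \<in> ?b" using supp by simp
      thus ?thesis using bound[of Q x] by simp
    qed
  qed
  also have "\<dots> = ?B * measure M ?b" using ib by simp
  also have "\<dots> \<le> ?B * (D * (A * ?s))"
    by (rule mult_left_mono[OF meas_ball]) (use A1 in simp_all)
  also have "\<dots> = 2 * A^2 * D * (?s powr (-1/2) * ?s powr 1)"
    by (simp add: power2_eq_square less_imp_le)
  also have "?s powr (-1/2) * ?s powr 1 = ?s powr (1/2)" by (subst powr_add[symmetric]) simp
  finally show ?thesis .
qed

lemma G_bound: "cmod (G Q R) \<le> dyadic_side R powr (-3/2) * (A * dyadic_side Q) * (\<integral>x. cmod (\<psi> Q x) \<partial>M)"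
proof -
  define c where "c = cnj (\<psi> R (dyadic_center Q))"
  define K where "K = dyadic_side R powr (-3/2) * (A * dyadic_side Q)"
  have K0: "K \<ge> 0" using A1 by (simp add: K_def less_imp_le)
  have i2: "integrable M (\<lambda>x. \<psi> Q x * c)" using integrable_psi by simp
  have z: "(\<integral>x. \<psi> Q x * c \<partial>M) = 0"
  proof -
    have "(\<integral>x. \<psi> Q x * c \<partial>M) = integral\<^sup>L M (\<psi> Q) * c" by (rule integral_mult_left_zero)
    then show ?thesis using int_psi0[of Q] by simp
  qed
  have "G Q R = (\<integral>x. \<psi> Q x * cnj (\<psi> R x) - \<psi> Q x * c \<partial>M)"
    by (simp add: G_def Bochner_Integration.integral_diff[OF integrable_prod i2] z int_psi0[of Q])
  hence "cmod (G Q R) \<le> (\<integral>x. norm (\<psi> Q x * cnj (\<psi> R x) - \<psi> Q x * c) \<partial>M)"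
    by (simp add: integral_norm_bound)
  also have "\<dots> \<le> (\<integral>x. K * cmod (\<psi> Q x) \<partial>M)"
  proof (rule integral_mono)
    show "integrable M (\<lambda>x. norm (\<psi> Q x * cnj (\<psi> R x) - \<psi> Q x * c))"
      by (intro integrable_norm Bochner_Integration.integrable_diff integrable_prod i2)
    show "integrable M (\<lambda>x. K * cmod (\<psi> Q x))"
      by (intro integrable_mult_right integrable_norm integrable_psi)
    fix x
    have e: "norm (\<psi> Q x * cnj (\<psi> R x) - \<psi> Q x * c) = cmod (\<psi> Q x) * dist (\<psi> R x) (\<psi> R (dyadic_center Q))"
      by (simp add: c_def dist_norm right_diff_distrib[symmetric] norm_mult complex_cnj_diff[symmetric] del: complex_cnj_diff)
    show "norm (\<psi> Q x * cnj (\<psi> R x) - \<psi> Q x * c) \<le> K * cmod (\<psi> Q x)"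
    proof (cases "\<psi> Q x = 0")
      case True thus ?thesis using e by simp
    next
      case False
      have "dist (\<psi> R x) (\<psi> R (dyadic_center Q)) \<le> dyadic_side R powr (-3/2) * dist x (dyadic_center Q)"
        by (rule lip)
      also have "\<dots> \<le> K" unfolding K_def
        using supp[OF False] by (intro mult_left_mono) (simp_all add: dist_commute less_imp_le)
      finally show ?thesis unfolding e by (subst mult.commute) (rule mult_right_mono, simp_all)
    qed
  qed
  also have "\<dots> = K * (\<integral>x. cmod (\<psi> Q x) \<partial>M)" by simp
  finally show ?thesis by (simp add: K_def)
qed

lemma G_sym: "cmod (G Q R) = cmod (G R Q)"
proof -
  have "G R Q = (\<integral>x. cnj (\<psi> Q x * cnj (\<psi> R x)) \<partial>M)" unfolding G_def
    by (rule Bochner_Integration.integral_cong) (simp_all add: mult.commute)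
  also have "\<dots> = cnj (G Q R)" unfolding G_def by (rule Bochner_Integration.integral_cnj)
  finally have "cnj (G Q R) = G R Q" by simp
  thus ?thesis by (metis complex_mod_cnj)
qed

lemma G_zero: "cmod (dyadic_center Q - dyadic_center R) \<ge> A * (dyadic_side Q + dyadic_side R) \<Longrightarrow> G Q R = 0"
proof -
  assume a: "cmod (dyadic_center Q - dyadic_center R) \<ge> A * (dyadic_side Q + dyadic_side R)"
  have "(\<lambda>x. \<psi> Q x * cnj (\<psi> R x)) = (\<lambda>x. 0)"
  proof
    fix x
    show "\<psi> Q x * cnj (\<psi> R x) = 0"
    proof (rule ccontr)
      assume "\<psi> Q x * cnj (\<psi> R x) \<noteq> 0"
      hence "\<psi> Q x \<noteq> 0" "\<psi> R x \<noteq> 0" by auto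
      hence "dist (dyadic_center Q) x < A * dyadic_side Q" "dist (dyadic_center R) x < A * dyadic_side R"
        by (auto intro: supp)
      moreover have "cmod (dyadic_center Q - dyadic_center R) \<le> dist (dyadic_center Q) x + dist (dyadic_center R) x"
        using dist_triangle3[of "dyadic_center Q" "dyadic_center R" x] by (simp add: dist_norm norm_minus_commute)
      ultimately show False using a by (simp add: distrib_left)
    qed
  qed
  thus ?thesis by (simp add: G_def)
qed

end



lemma count_int:
  assumes "\<rho> > 0"
  shows "finite {k::int. \<bar>c - real_of_int k\<bar> < \<rho>} \<and> real (card {k::int. \<bar>c - real_of_int k\<bar> < \<rho>}) \<le> 2 * \<rho> + 1"
proof -
  let ?a = "\<lceil>c - \<rho>\<rceil>" and ?b = "\<lfloor>c + \<rho>\<rfloor>"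
  have sub: "{k::int. \<bar>c - real_of_int k\<bar> < \<rho>} \<subseteq> {?a..?b}"
  proof
    fix k assume "k \<in> {k::int. \<bar>c - real_of_int k\<bar> < \<rho>}"
    hence "c - \<rho> \<le> real_of_int k" "real_of_int k \<le> c + \<rho>" by auto
    hence "?a \<le> k" "k \<le> ?b" by (simp_all add: ceiling_le_iff le_floor_iff)
    thus "k \<in> {?a..?b}" by simp
  qed
  have fin: "finite {k::int. \<bar>c - real_of_int k\<bar> < \<rho>}" using sub finite_subset by blast
  have "card {k::int. \<bar>c - real_of_int k\<bar> < \<rho>} \<le> card {?a..?b}" using sub by (intro card_mono) auto
  also have "card {?a..?b} = nat (?b - ?a + 1)" by simp
  finally have c1: "real (card {k::int. \<bar>c - real_of_int k\<bar> < \<rho>}) \<le> real (nat (?b - ?a + 1))" by simp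
  have "real (nat (?b - ?a + 1)) \<le> 2 * \<rho> + 1"
  proof (cases "?b - ?a + 1 \<ge> 0")
    case True
    have "real_of_int ?b \<le> c + \<rho>" by simp
    moreover have "c - \<rho> \<le> real_of_int ?a" by simp
    moreover have "real (nat (?b - ?a + 1)) = real_of_int (?b - ?a + 1)" using True by simp
    ultimately show ?thesis by linarith
  next
    case False thus ?thesis using assms by simp
  qed
  with c1 fin show ?thesis by simp
qed

lemma center_Re: "Re (dyadic_center R) = (real_of_int (fst (snd R)) + 1/2) * dyadic_side R"
  by (auto simp: dyadic_center_def dyadic_side_def split: prod.splits)
lemma center_Im: "Im (dyadic_center R) = (real_of_int (snd (snd R)) + 1/2) * dyadic_side R"
  by (auto simp: dyadic_center_def dyadic_side_def split: prod.splits)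

lemma div_helper:
  assumes "s > (0::real)"
  shows "\<bar>x - (k + 1/2) * s\<bar> / s = \<bar>(x / s - 1/2) - k\<bar>"
proof -
  have "\<bar>x - (k + 1/2) * s\<bar> / s = \<bar>(x - (k + 1/2) * s) / s\<bar>" using assms by simp
  also have "(x - (k + 1/2) * s) / s = (x / s - 1/2) - k" using assms by (simp add: field_simps)
  finally show ?thesis .
qed

lemma count_sq:
  fixes j :: int
  assumes "r > 0"
  shows "real (card {R\<in>F. fst R = j \<and> cmod (w - dyadic_center R) < r}) \<le> (2 * r / 2 powr j + 1)^2"
proof -
  define s where "s = (2::real) powr j"
  have s0: "s > 0" by (simp add: s_def)
  define K where "K = {k::int. \<bar>(Re w / s - 1/2) - real_of_int k\<bar> < r / s}"
  define L where "L = {k::int. \<bar>(Im w / s - 1/2) - real_of_int k\<bar> < r / s}"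
  have rs: "r / s > 0" using assms s0 by simp
  note cK = count_int[OF rs, of "Re w / s - 1/2"] and cL = count_int[OF rs, of "Im w / s - 1/2"]
  have sub: "{R\<in>F. fst R = j \<and> cmod (w - dyadic_center R) < r} \<subseteq> (\<lambda>(k,l). (j,k,l)) ` (K \<times> L)"
  proof
    fix R assume R: "R \<in> {R\<in>F. fst R = j \<and> cmod (w - dyadic_center R) < r}"
    obtain k l where Rk: "R = (j,k,l)" using R by (cases R) auto
    have sR: "dyadic_side R = s" using Rk by (simp add: s_def dyadic_side_def)
    have "\<bar>Re w - (real_of_int k + 1/2) * s\<bar> < r"
      using R abs_Re_le_cmod[of "w - dyadic_center R"] center_Re[of R] Rk sR by simp
    hence "\<bar>Re w - (real_of_int k + 1/2) * s\<bar> / s < r / s" using s0 by (simp add: divide_strict_right_mono)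
    moreover have "\<bar>Re w - (real_of_int k + 1/2) * s\<bar> / s = \<bar>(Re w / s - 1/2) - real_of_int k\<bar>"
      using s0 by (rule div_helper)
    ultimately have "k \<in> K" by (simp add: K_def)
    have "\<bar>Im w - (real_of_int l + 1/2) * s\<bar> < r"
      using R abs_Im_le_cmod[of "w - dyadic_center R"] center_Im[of R] Rk sR by simp
    hence "\<bar>Im w - (real_of_int l + 1/2) * s\<bar> / s < r / s" using s0 by (simp add: divide_strict_right_mono)
    moreover have "\<bar>Im w - (real_of_int l + 1/2) * s\<bar> / s = \<bar>(Im w / s - 1/2) - real_of_int l\<bar>"
      using s0 by (rule div_helper)
    ultimately have "l \<in> L" by (simp add: L_def)
    with \<open>k \<in> K\<close> Rk show "R \<in> (\<lambda>(k,l). (j,k,l)) ` (K \<times> L)" by force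
  qed
  have fKL: "finite (K \<times> L)" using cK cL by (simp add: K_def L_def)
  have "card {R\<in>F. fst R = j \<and> cmod (w - dyadic_center R) < r} \<le> card ((\<lambda>(k,l). (j,k,l)) ` (K \<times> L))"
    using sub fKL by (intro card_mono) auto
  also have "\<dots> \<le> card (K \<times> L)" by (rule card_image_le[OF fKL])
  also have "\<dots> = card K * card L" by (simp add: card_cartesian_product)
  finally have "card {R\<in>F. fst R = j \<and> cmod (w - dyadic_center R) < r} \<le> card K * card L" .
  hence "real (card {R\<in>F. fst R = j \<and> cmod (w - dyadic_center R) < r}) \<le> real (card K) * real (card L)"
    by (simp only: of_nat_mult[symmetric] of_nat_le_iff)
  also have "\<dots> \<le> (2 * (r/s) + 1) * (2 * (r/s) + 1)"
    using cK cL by (intro mult_mono) (simp_all add: K_def L_def)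
  finally show ?thesis by (simp add: s_def power2_eq_square)
qed

lemma geom:
  fixes q :: real and j0 :: int
  assumes "finite J" "0 \<le> q" "q < 1"
  shows "(\<Sum>j\<in>J. q ^ nat \<bar>j - j0\<bar>) \<le> 2 / (1 - q)"
proof -
  have sm: "summable (\<lambda>n. q ^ n)" using assms by (simp add: summable_geometric)
  have sI: "\<And>I. finite I \<Longrightarrow> (\<Sum>n\<in>I. q ^ n) \<le> 1 / (1 - q)"
  proof -
    fix I :: "nat set" assume "finite I"
    hence "(\<Sum>n\<in>I. q ^ n) \<le> (\<Sum>n. q ^ n)" using sm assms by (intro sum_le_suminf) auto
    also have "\<dots> = 1 / (1 - q)" using assms by (simp add: suminf_geometric)
    finally show "(\<Sum>n\<in>I. q ^ n) \<le> 1 / (1 - q)" .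
  qed
  let ?J1 = "{j\<in>J. j \<ge> j0}" and ?J2 = "{j\<in>J. j < j0}"
  have "(\<Sum>j\<in>J. q ^ nat \<bar>j - j0\<bar>) = (\<Sum>j\<in>?J1. q ^ nat \<bar>j - j0\<bar>) + (\<Sum>j\<in>?J2. q ^ nat \<bar>j - j0\<bar>)"
    using assms(1) by (subst sum.union_disjoint[symmetric]) (auto intro: sum.cong)
  also have "(\<Sum>j\<in>?J1. q ^ nat \<bar>j - j0\<bar>) = (\<Sum>n\<in>(\<lambda>j. nat \<bar>j - j0\<bar>) ` ?J1. q ^ n)"
    by (subst sum.reindex) (auto simp: inj_on_def)
  also have "\<dots> \<le> 1 / (1 - q)" using assms(1) by (intro sI) simp
  also have "(\<Sum>j\<in>?J2. q ^ nat \<bar>j - j0\<bar>) = (\<Sum>n\<in>(\<lambda>j. nat \<bar>j - j0\<bar>) ` ?J2. q ^ n)"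
    by (subst sum.reindex) (auto simp: inj_on_def)
  also have "\<dots> \<le> 1 / (1 - q)" using assms(1) by (intro sI) simp
  finally show ?thesis by simp
qed



context rs begin

lemma side_powr: "dyadic_side Q powr p = 2 powr (real_of_int (fst Q) * p)"
  by (simp add: side_eq powr_powr)

lemma scale_hi:
  assumes F: "finite F" and j: "j \<ge> fst Q"
  shows "(\<Sum>R\<in>{R\<in>F. fst R = j}. cmod (G Q R)) \<le> (4*A+1)^2 * (2 * A^3 * D) * 2 powr (3/2 * real_of_int (fst Q - j))"
proof -
  define sj where "sj = (2::real) powr real_of_int j"
  have s0: "sj > 0" by (simp add: sj_def)
  have lQ: "dyadic_side Q \<le> sj" unfolding sj_def side_eq using j by simp
  define S where "S = {R\<in>F. fst R = j \<and> cmod (dyadic_center Q - dyadic_center R) < 2*A* sj}"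
  define t where "t = (2::real) powr (3/2 * real_of_int (fst Q - j))"
  have sideR: "\<And>R. fst R = j \<Longrightarrow> dyadic_side R = sj" by (simp add: side_eq sj_def)
  have "(\<Sum>R\<in>{R\<in>F. fst R = j}. cmod (G Q R)) = (\<Sum>R\<in>S. cmod (G Q R))"
  proof (rule sum.mono_neutral_right)
    show "finite {R\<in>F. fst R = j}" using F by simp
    show "S \<subseteq> {R\<in>F. fst R = j}" by (auto simp: S_def)
    show "\<forall>R\<in>{R\<in>F. fst R = j} - S. cmod (G Q R) = 0"
    proof
      fix R assume R: "R \<in> {R\<in>F. fst R = j} - S"
      hence "cmod (dyadic_center Q - dyadic_center R) \<ge> 2*A* sj" by (auto simp: S_def)
      moreover have "A * (dyadic_side Q + dyadic_side R) \<le> 2*A* sj"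
        using R sideR[of R] lQ A1 by (simp add: distrib_left)
      ultimately have "G Q R = 0" by (intro G_zero) linarith
      thus "cmod (G Q R) = 0" by simp
    qed
  qed
  also have "\<dots> \<le> real (card S) * (2 * A^3 * D * t)"
  proof (rule sum_bounded_above)
    fix R assume R: "R \<in> S"
    have sR: "dyadic_side R = sj" using R sideR by (simp add: S_def)
    have "cmod (G Q R) \<le> dyadic_side R powr (-3/2) * (A * dyadic_side Q) * (\<integral>x. cmod (\<psi> Q x) \<partial>M)"
      by (rule G_bound)
    also have "\<dots> \<le> dyadic_side R powr (-3/2) * (A * dyadic_side Q) * (2 * A^2 * D * dyadic_side Q powr (1/2))"
      by (rule mult_left_mono[OF L1]) (use A1 side_pos[of Q] in \<open>simp add: less_imp_le\<close>)
    also have "\<dots> = 2 * A^3 * D * (dyadic_side R powr (-3/2) * dyadic_side Q powr 1 * dyadic_side Q powr (1/2))"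
      by (simp add: power3_eq_cube power2_eq_square less_imp_le)
    also have "dyadic_side R powr (-3/2) * dyadic_side Q powr 1 * dyadic_side Q powr (1/2) = t"
      unfolding side_powr t_def using R
      by (simp add: S_def powr_add[symmetric] algebra_simps diff_divide_distrib)
    finally show "cmod (G Q R) \<le> 2 * A^3 * D * t" .
  qed
  also have "\<dots> \<le> (4*A+1)^2 * (2 * A^3 * D * t)"
  proof (rule mult_right_mono)
    have "S = {R\<in>F. fst R = j \<and> cmod (dyadic_center Q - dyadic_center R) < 2*A* sj}" by (rule S_def)
    hence "real (card S) \<le> (2 * (2*A* sj) / 2 powr j + 1)^2"
      using count_sq[of "2*A* sj" F j "dyadic_center Q"] A1 s0 by simp
    also have "2 * (2*A* sj) / 2 powr j = 4 * A" using s0 by (simp add: sj_def)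
    finally show "real (card S) \<le> (4*A+1)^2" .
    show "0 \<le> 2 * A^3 * D * t" using A1 D_nonneg by (simp add: t_def)
  qed
  finally show ?thesis by (simp add: t_def)
qed


lemma scale_lo:
  assumes F: "finite F" and j: "j < fst Q"
  shows "(\<Sum>R\<in>{R\<in>F. fst R = j}. cmod (G Q R)) \<le> 6 * A^3 * D * (2*A+1)^2 * 2 powr (real_of_int (j - fst Q) / 2)"
proof -
  define sj where "sj = (2::real) powr real_of_int j"
  define l where "l = dyadic_side Q"
  have s0: "sj > 0" by (simp add: sj_def)
  have l0: "l > 0" by (simp add: l_def)
  have sl: "sj \<le> l" unfolding sj_def l_def side_eq using j by simp
  have sideR: "\<And>R. fst R = j \<Longrightarrow> dyadic_side R = sj" by (simp add: side_eq sj_def)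
  define S where "S = {R\<in>F. fst R = j \<and> cmod (dyadic_center Q - dyadic_center R) < A * (l + sj)}"
  define c where "c = 2 * A * sj powr (-1/2) * (2*A+1)^2"
  define B where "B = ball (dyadic_center Q) (3 * A * l)"
  have finS: "finite S" using F by (simp add: S_def)
  have c0: "c \<ge> 0" using A1 by (simp add: c_def)
  have "(\<Sum>R\<in>{R\<in>F. fst R = j}. cmod (G Q R)) = (\<Sum>R\<in>S. cmod (G Q R))"
  proof (rule sum.mono_neutral_right)
    show "finite {R\<in>F. fst R = j}" using F by simp
    show "S \<subseteq> {R\<in>F. fst R = j}" by (auto simp: S_def)
    show "\<forall>R\<in>{R\<in>F. fst R = j} - S. cmod (G Q R) = 0"
    proof
      fix R assume R: "R \<in> {R\<in>F. fst R = j} - S"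
      hence "cmod (dyadic_center Q - dyadic_center R) \<ge> A * (l + sj)" by (auto simp: S_def)
      hence "G Q R = 0" using R sideR[of R] by (intro G_zero) (simp add: l_def)
      thus "cmod (G Q R) = 0" by simp
    qed
  qed
  also have "\<dots> \<le> (\<Sum>R\<in>S. l powr (-3/2) * (A * sj) * (\<integral>x. cmod (\<psi> R x) \<partial>M))"
  proof (rule sum_mono)
    fix R assume R: "R \<in> S"
    have "cmod (G Q R) = cmod (G R Q)" by (rule G_sym)
    also have "\<dots> \<le> dyadic_side Q powr (-3/2) * (A * dyadic_side R) * (\<integral>x. cmod (\<psi> R x) \<partial>M)"
      by (rule G_bound)
    finally show "cmod (G Q R) \<le> l powr (-3/2) * (A * sj) * (\<integral>x. cmod (\<psi> R x) \<partial>M)"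
      using R sideR[of R] by (simp add: S_def l_def)
  qed
  also have "\<dots> = l powr (-3/2) * (A * sj) * (\<integral>x. (\<Sum>R\<in>S. cmod (\<psi> R x)) \<partial>M)"
    by (simp add: sum_distrib_left Bochner_Integration.integral_sum integrable_norm integrable_psi)
  also have "\<dots> \<le> l powr (-3/2) * (A * sj) * (\<integral>x. c * indicat_real B x \<partial>M)"
  proof (rule mult_left_mono)
    show "0 \<le> l powr (-3/2) * (A * sj)" using A1 s0 by simp
    have ib: "integrable M (indicat_real B)"
      unfolding B_def by (rule integrable_real_indicator[OF ball_sets emeas_ball_fin])
    show "(\<integral>x. (\<Sum>R\<in>S. cmod (\<psi> R x)) \<partial>M) \<le> (\<integral>x. c * indicat_real B x \<partial>M)"
    proof (rule integral_mono)
      show "integrable M (\<lambda>x. \<Sum>R\<in>S. cmod (\<psi> R x))"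
        by (intro Bochner_Integration.integrable_sum integrable_norm integrable_psi)
      show "integrable M (\<lambda>x. c * indicat_real B x)" using ib by simp
      fix x
      show "(\<Sum>R\<in>S. cmod (\<psi> R x)) \<le> c * indicat_real B x"
      proof (cases "x \<in> B")
        case True
        define S2 where "S2 = {R\<in>F. fst R = j \<and> cmod (x - dyadic_center R) < A * sj}"
        have finS2: "finite S2" using F by (simp add: S2_def)
        have "(\<Sum>R\<in>S. cmod (\<psi> R x)) = (\<Sum>R\<in>S \<inter> S2. cmod (\<psi> R x))"
        proof (rule sum.mono_neutral_right[OF finS])
          show "S \<inter> S2 \<subseteq> S" by blast
          show "\<forall>R\<in>S - S \<inter> S2. cmod (\<psi> R x) = 0"
          proof
            fix R assume R: "R \<in> S - S \<inter> S2"
            hence "cmod (x - dyadic_center R) \<ge> A * sj" by (auto simp: S_def S2_def)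
            hence "dist (dyadic_center R) x \<ge> A * dyadic_side R"
              using R sideR[of R] by (simp add: S_def dist_norm norm_minus_commute)
            thus "cmod (\<psi> R x) = 0" using supp0 by simp
          qed
        qed
        also have "\<dots> \<le> (\<Sum>R\<in>S2. cmod (\<psi> R x))"
          by (rule sum_mono2[OF finS2]) auto
        also have "\<dots> \<le> real (card S2) * (2 * A * sj powr (-1/2))"
        proof (rule sum_bounded_above)
          fix R assume "R \<in> S2"
          thus "cmod (\<psi> R x) \<le> 2 * A * sj powr (-1/2)" using bound[of R x] sideR[of R] by (simp add: S2_def)
        qed
        also have "\<dots> \<le> (2*A+1)^2 * (2 * A * sj powr (-1/2))"
        proof (rule mult_right_mono)
          have "real (card S2) \<le> (2 * (A * sj) / 2 powr j + 1)^2"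
            unfolding S2_def using A1 s0 by (intro count_sq) simp
          also have "2 * (A * sj) / 2 powr j = 2 * A" using s0 by (simp add: sj_def)
          finally show "real (card S2) \<le> (2*A+1)^2" .
          show "0 \<le> 2 * A * sj powr (-1/2)" using A1 by simp
        qed
        also have "\<dots> = c * indicat_real B x" using True by (simp add: c_def)
        finally show ?thesis .
      next
        case False
        have "\<forall>R\<in>S. cmod (\<psi> R x) = 0"
        proof
          fix R assume R: "R \<in> S"
          show "cmod (\<psi> R x) = 0"
          proof (rule ccontr)
            assume "cmod (\<psi> R x) \<noteq> 0"
            hence "dist (dyadic_center R) x < A * sj" using supp[of R x] sideR[of R] R by (simp add: S_def)
            moreover have "cmod (dyadic_center Q - dyadic_center R) < A * (l + sj)" using R by (simp add: S_def)
            moreover have "dist (dyadic_center Q) x \<le> cmod (dyadic_center Q - dyadic_center R) + dist (dyadic_center R) x"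
              using dist_triangle[of "dyadic_center Q" x "dyadic_center R"] by (simp add: dist_norm)
            moreover have "A * (l + sj) + A * sj \<le> 3 * A * l" using sl A1 by (simp add: algebra_simps)
            moreover have "dist (dyadic_center Q) x \<ge> 3 * A * l" using False by (simp add: B_def)
            ultimately show False by linarith
          qed
        qed
        hence "(\<Sum>R\<in>S. cmod (\<psi> R x)) = 0" by simp
        thus ?thesis using False by simp
      qed
    qed
  qed
  also have "(\<integral>x. c * indicat_real B x \<partial>M) = c * measure M B" by simp
  also have "l powr (-3/2) * (A * sj) * (c * measure M B) \<le> l powr (-3/2) * (A * sj) * (c * (D * (3 * A * l)))"
    unfolding B_def using A1 s0 l0 c0 by (intro mult_left_mono meas_ball) simp_all
  also have "l powr (-3/2) * (A * sj) * (c * (D * (3 * A * l))) =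
      6 * A^3 * D * (2*A+1)^2 * ((l powr (-3/2) * l powr 1) * (sj powr 1 * sj powr (-1/2)))"
    using l0 s0 by (simp add: c_def power3_eq_cube algebra_simps)
  also have "(l powr (-3/2) * l powr 1) * (sj powr 1 * sj powr (-1/2)) = 2 powr (real_of_int (j - fst Q) / 2)"
    unfolding l_def sj_def side_powr by (simp add: powr_add[symmetric] powr_powr algebra_simps diff_divide_distrib)
  finally show ?thesis .
qed

end



lemma qpow: "((2::real) powr (-1/2)) ^ n = 2 powr (- real n / 2)"
proof -
  have "((2::real) powr (-1/2)) ^ n = (2 powr (-1/2)) powr real n" by (simp add: powr_realpow)
  also have "\<dots> = 2 powr (- real n / 2)" by (simp add: powr_powr)
  finally show ?thesis .
qed

lemma q_lt1: "(2::real) powr (-1/2) < 1" by (rule powr_less_one) simp_all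

context rs begin

definition "K0 = 6 * A^3 * D * (4*A+1)^2"

lemma K0_nonneg: "K0 \<ge> 0" using A1 D_nonneg by (simp add: K0_def)

lemma scale_bound:
  assumes F: "finite F"
  shows "(\<Sum>R\<in>{R\<in>F. fst R = j}. cmod (G Q R)) \<le> K0 * (2 powr (-1/2)) ^ nat \<bar>j - fst Q\<bar>"
proof (cases "j \<ge> fst Q")
  case True
  have "(\<Sum>R\<in>{R\<in>F. fst R = j}. cmod (G Q R)) \<le> (4*A+1)^2 * (2 * A^3 * D) * 2 powr (3/2 * real_of_int (fst Q - j))"
    by (rule scale_hi[OF F True])
  also have "\<dots> \<le> K0 * 2 powr (- real (nat \<bar>j - fst Q\<bar>) / 2)"
  proof (rule mult_mono)
    show "(4*A+1)^2 * (2 * A^3 * D) \<le> K0" using A1 D_nonneg by (simp add: K0_def)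
    have "real (nat \<bar>j - fst Q\<bar>) = real_of_int (j - fst Q)" using True by simp
    hence "3/2 * real_of_int (fst Q - j) \<le> - real (nat \<bar>j - fst Q\<bar>) / 2" using True by simp
    thus "(2::real) powr (3/2 * real_of_int (fst Q - j)) \<le> 2 powr (- real (nat \<bar>j - fst Q\<bar>) / 2)"
      by (intro powr_mono) simp_all
  qed (use K0_nonneg in simp_all)
  finally show ?thesis unfolding qpow .
next
  case False
  hence j: "j < fst Q" by simp
  have "(\<Sum>R\<in>{R\<in>F. fst R = j}. cmod (G Q R)) \<le> 6 * A^3 * D * (2*A+1)^2 * 2 powr (real_of_int (j - fst Q) / 2)"
    by (rule scale_lo[OF F j])
  also have "\<dots> \<le> K0 * 2 powr (- real (nat \<bar>j - fst Q\<bar>) / 2)"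
  proof (rule mult_mono)
    have "(2*A+1)^2 \<le> (4*A+1)^2" using A1 by (intro power_mono) simp_all
    thus "6 * A^3 * D * (2*A+1)^2 \<le> K0" unfolding K0_def using A1 D_nonneg
      by (intro mult_left_mono) simp_all
    have "real (nat \<bar>j - fst Q\<bar>) = real_of_int (fst Q - j)" using j by simp
    thus "(2::real) powr (real_of_int (j - fst Q) / 2) \<le> 2 powr (- real (nat \<bar>j - fst Q\<bar>) / 2)"
      by simp
  qed (use K0_nonneg in simp_all)
  finally show ?thesis unfolding qpow .
qed

lemma schur:
  assumes F: "finite F"
  shows "(\<Sum>R\<in>F. cmod (G Q R)) \<le> K0 * (2 / (1 - 2 powr (-1/2)))"
proof -
  have "(\<Sum>R\<in>F. cmod (G Q R)) = (\<Sum>j\<in>fst ` F. \<Sum>R\<in>{R\<in>F. fst R = j}. cmod (G Q R))"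
    using F by (intro sum.group[symmetric]) simp_all
  also have "\<dots> \<le> (\<Sum>j\<in>fst ` F. K0 * (2 powr (-1/2)) ^ nat \<bar>j - fst Q\<bar>)"
    by (intro sum_mono scale_bound F)
  also have "\<dots> = K0 * (\<Sum>j\<in>fst ` F. (2 powr (-1/2)) ^ nat \<bar>j - fst Q\<bar>)"
    by (simp add: sum_distrib_left)
  also have "\<dots> \<le> K0 * (2 / (1 - 2 powr (-1/2)))"
    using F q_lt1 by (intro mult_left_mono geom K0_nonneg) simp_all
  finally show ?thesis .
qed


lemma amgm: "x * y * g \<le> (x^2 / 2 + y^2 / 2) * (g::real)" if "g \<ge> 0" for x y
proof -
  have "x * y \<le> x^2 / 2 + y^2 / 2" using sum_squares_ge_zero[of "x - y" 0]
    by (simp add: power2_eq_square algebra_simps)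
  thus ?thesis using that by (rule mult_right_mono)
qed

lemma main_loc:
  fixes a :: "dyadic \<Rightarrow> complex"
  assumes F: "finite F"
  shows "(\<integral>\<^sup>+ x. ennreal ((cmod (\<Sum>Q\<in>F. a Q * \<psi> Q x))\<^sup>2) \<partial>M)
           \<le> ennreal (K0 * (2 / (1 - 2 powr (-1/2))) * (\<Sum>Q\<in>F. (cmod (a Q))\<^sup>2))"
proof -
  define Kc where "Kc = K0 * (2 / (1 - 2 powr (-1/2)))"
  define f where "f x = (\<Sum>Q\<in>F. a Q * \<psi> Q x)" for x
  define h where "h x = (\<Sum>Q\<in>F. \<Sum>R\<in>F. a Q * cnj (a R) * (\<psi> Q x * cnj (\<psi> R x)))" for x
  have pt: "complex_of_real ((cmod (f x))\<^sup>2) = h x" for x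
  proof -
    have "complex_of_real ((cmod (f x))\<^sup>2) = f x * cnj (f x)" by (rule complex_norm_square)
    also have "\<dots> = h x" unfolding f_def h_def
      by (simp add: sum_product cnj_sum mult_ac)
    finally show ?thesis .
  qed
  have ih: "integrable M h" unfolding h_def
    by (intro Bochner_Integration.integrable_sum integrable_mult_right integrable_prod)
  have eqf: "(\<lambda>x. (cmod (f x))\<^sup>2) = (\<lambda>x. Re (h x))"
  proof
    fix x show "(cmod (f x))\<^sup>2 = Re (h x)" using arg_cong[OF pt[of x], of Re] by simp
  qed
  have if2: "integrable M (\<lambda>x. (cmod (f x))\<^sup>2)" unfolding eqf using ih by (rule integrable_Re)
  have S2eq: "(\<Sum>Q\<in>F. \<Sum>R\<in>F. (cmod (a R))\<^sup>2 * cmod (G Q R)) = (\<Sum>Q\<in>F. \<Sum>R\<in>F. (cmod (a Q))\<^sup>2 * cmod (G Q R))"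
    by (subst sum.swap) (intro sum.cong refl, metis G_sym)
  have nn: "(\<integral>\<^sup>+ x. ennreal ((cmod (f x))\<^sup>2) \<partial>M) = ennreal (\<integral>x. (cmod (f x))\<^sup>2 \<partial>M)"
    using if2 by (intro nn_integral_eq_integral) simp_all
  have "(\<integral>x. (cmod (f x))\<^sup>2 \<partial>M) = Re (integral\<^sup>L M h)"
    unfolding eqf by (rule integral_Re[OF ih])
  also have "integral\<^sup>L M h = (\<Sum>Q\<in>F. \<Sum>R\<in>F. a Q * cnj (a R) * G Q R)"
    unfolding h_def G_def
    by (simp add: Bochner_Integration.integral_sum integrable_mult_right integrable_prod
        Bochner_Integration.integrable_sum)
  also have "Re (\<Sum>Q\<in>F. \<Sum>R\<in>F. a Q * cnj (a R) * G Q R) \<le> cmod (\<Sum>Q\<in>F. \<Sum>R\<in>F. a Q * cnj (a R) * G Q R)"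
    by (rule complex_Re_le_cmod)
  also have "\<dots> \<le> (\<Sum>Q\<in>F. \<Sum>R\<in>F. cmod (a Q) * cmod (a R) * cmod (G Q R))"
    by (rule order_trans[OF norm_sum sum_mono], rule order_trans[OF norm_sum], simp add: norm_mult)
  also have "\<dots> \<le> (\<Sum>Q\<in>F. \<Sum>R\<in>F. ((cmod (a Q))\<^sup>2 / 2 + (cmod (a R))\<^sup>2 / 2) * cmod (G Q R))"
    by (intro sum_mono amgm) simp
  also have "\<dots> = (\<Sum>Q\<in>F. \<Sum>R\<in>F. (cmod (a Q))\<^sup>2 * cmod (G Q R)) / 2
                  + (\<Sum>Q\<in>F. \<Sum>R\<in>F. (cmod (a R))\<^sup>2 * cmod (G Q R)) / 2"
    by (simp add: sum.distrib distrib_right sum_divide_distrib)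
  also have "\<dots> = (\<Sum>Q\<in>F. \<Sum>R\<in>F. (cmod (a Q))\<^sup>2 * cmod (G Q R))"
    using S2eq by simp
  also have "\<dots> = (\<Sum>Q\<in>F. (cmod (a Q))\<^sup>2 * (\<Sum>R\<in>F. cmod (G Q R)))"
    by (simp add: sum_distrib_left)
  also have "(\<Sum>Q\<in>F. (cmod (a Q))\<^sup>2 * (\<Sum>R\<in>F. cmod (G Q R))) \<le> (\<Sum>Q\<in>F. (cmod (a Q))\<^sup>2 * Kc)"
    unfolding Kc_def by (intro sum_mono mult_left_mono schur F) simp
  also have "\<dots> = Kc * (\<Sum>Q\<in>F. (cmod (a Q))\<^sup>2)" by (simp add: sum_distrib_left mult.commute)
  finally have "(\<integral>x. (cmod (f x))\<^sup>2 \<partial>M) \<le> Kc * (\<Sum>Q\<in>F. (cmod (a Q))\<^sup>2)" by simp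
  hence "(\<integral>\<^sup>+ x. ennreal ((cmod (f x))\<^sup>2) \<partial>M) \<le> ennreal (Kc * (\<Sum>Q\<in>F. (cmod (a Q))\<^sup>2))"
    unfolding nn by (rule ennreal_leI)
  thus ?thesis by (simp add: f_def Kc_def)
qed

end

theorem mainTheorem6:
  fixes C0 A :: real
  assumes "A > 1"
  shows "\<exists>C. \<forall>M :: complex measure. \<forall>\<psi> :: dyadic \<Rightarrow> complex \<Rightarrow> complex.
           \<forall>a :: dyadic \<Rightarrow> complex. \<forall>F :: dyadic set.
           nice_measure C0 M \<longrightarrow> (\<forall>Q. \<psi> Q \<in> Psi M Q A) \<longrightarrow> finite F \<longrightarrow>
           (\<integral>\<^sup>+ x. ennreal ((cmod (\<Sum>Q\<in>F. a Q * \<psi> Q x))\<^sup>2) \<partial>M)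
             \<le> ennreal (C * (\<Sum>Q\<in>F. (cmod (a Q))\<^sup>2))"
proof (intro exI allI impI)
  fix M :: "complex measure" and \<psi> :: "dyadic \<Rightarrow> complex \<Rightarrow> complex" and a :: "dyadic \<Rightarrow> complex" and F :: "dyadic set"
  assume n: "nice_measure C0 M" and p: "\<forall>Q. \<psi> Q \<in> Psi M Q A" and F: "finite F"
  interpret rs M C0 A \<psi> using n p assms by unfold_locales auto
  show "(\<integral>\<^sup>+ x. ennreal ((cmod (\<Sum>Q\<in>F. a Q * \<psi> Q x))\<^sup>2) \<partial>M)
        \<le> ennreal (6 * A^3 * max C0 0 * (4*A+1)^2 * (2 / (1 - 2 powr (-1/2))) * (\<Sum>Q\<in>F. (cmod (a Q))\<^sup>2))"
    using main_loc[OF F, of a] by (simp add: K0_def D_def)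
qed


end
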